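(* Fix a number $x$ (real or complex) and let $(u_n)_{n\ge0}$ satisfy $(n+\tfrac12)u_{n+1}=2xn\,u_n-(n-\tfrac12)u_{n-1}$ for all $n\ge1$. (a) If $\hat u_n=\dfrac{x u_n-u_{n-1}}{2n+1}$ for $n\ge1$, then $(n+\tfrac32)\hat u_{n+1}=2xn\,\hat u_n-(n-\tfrac32)\hat u_{n-1}$ for all $n\ge2$. (b) The same conclusion holds for $\hat u_n=\dfrac{x u_n-u_{n+1}}{2n-1}$, $n\ge0$. *)

theory Defs
  imports "HOL-Analysis.Analysis"
begin

end

theory Submission
  imports Defs
begin

lemma keyA:
  fixes A B C E M P Q R x :: "'a::field_char_0"
  assumes "A \<noteq> 0" "B \<noteq> 0" "C \<noteq> 0" "A*B*P = 4*x*M*B*Q - A*E*R"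
  shows "(C/2)*(P/C) = 2*x*M*(Q/A) - (E/2)*(R/B)"
proof -
  have "P = (4*x*M*B*Q - A*E*R) / (A*B)" using assms by (simp add: eq_divide_eq mult.commute)
  thus ?thesis using assms(1-3) apply (simp add: field_simps) by algebra
qed

lemma keyB:
  fixes A B C E M P Q R x :: "'a::field_char_0"
  assumes "A \<noteq> 0" "B \<noteq> 0" "E \<noteq> 0" "C*B*P = 4*x*M*A*Q - A*B*R"
  shows "(C/2)*(P/A) = 2*x*M*(Q/B) - (E/2)*(R/E)"
proof -
  have "P = (4*x*M*A*Q - A*B*R) / (C*B)" if "C \<noteq> 0" using assms that by (simp add: eq_divide_eq mult.commute)
  show ?thesis
  proof (cases "C = 0")
    case True
    then show ?thesis using assms by (simp add: field_simps)
  next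
    case False
    show ?thesis using assms False \<open>C \<noteq> 0 \<Longrightarrow> _\<close> by (simp add: field_simps)
  qed
qed

theorem mainTheorem3:
  fixes x :: "'a :: field_char_0" and u :: "nat \<Rightarrow> 'a"
  assumes rec: "\<And>n. n \<ge> 1 \<Longrightarrow>
      (of_nat n + 1/2) * u (n+1) = 2 * x * of_nat n * u n - (of_nat n - 1/2) * u (n-1)"
  shows "(\<forall>n\<ge>2. let uh = (\<lambda>m. (x * u m - u (m-1)) / (2 * of_nat m + 1)) in
            (of_nat n + 3/2) * uh (n+1) = 2 * x * of_nat n * uh n - (of_nat n - 3/2) * uh (n-1))
       \<and> (\<forall>n\<ge>2. let uh = (\<lambda>m. (x * u m - u (m+1)) / (2 * of_nat m - 1)) in
            (of_nat n + 3/2) * uh (n+1) = 2 * x * of_nat n * uh n - (of_nat n - 3/2) * uh (n-1))"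
proof (intro conjI allI impI)
  fix n :: nat assume n: "n \<ge> 2"
  then obtain k where k: "n = k + 2" by (metis add.commute le_add_diff_inverse)
  define N :: 'a where "N = of_nat k"
  have r1: "(N + 3/2) * u (k+2) = 2 * x * (N+1) * u (k+1) - (N + 1/2) * u k"
    using rec[of "k+1"] by (simp add: N_def algebra_simps)
  have r2: "(N + 5/2) * u (k+3) = 2 * x * (N+2) * u (k+2) - (N + 3/2) * u (k+1)"
    using rec[of "k+2"] by (simp add: N_def algebra_simps numeral_eq_Suc)
  have r3: "(N + 7/2) * u (k+4) = 2 * x * (N+3) * u (k+3) - (N + 5/2) * u (k+2)"
    using rec[of "k+3"] by (simp add: N_def algebra_simps numeral_eq_Suc)
  have nz: "\<And>c::nat. N + of_nat c + 1/2 \<noteq> 0"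
  proof -
    fix c :: nat
    have "2 * (N + of_nat c + 1/2) = of_nat (2*k + 2*c + 1)" by (simp add: N_def algebra_simps)
    thus "N + of_nat c + 1/2 \<noteq> 0" by (metis mult_zero_right of_nat_eq_0_iff add_is_0 one_neq_zero)
  qed
  have d1: "N + 1/2 \<noteq> 0" using nz[of 0] by simp
  have d3: "N + 3/2 \<noteq> 0" using nz[of 1] by (simp add: field_simps)
  have d5: "N + 5/2 \<noteq> 0" using nz[of 2] by (simp add: field_simps)
  have d7: "N + 7/2 \<noteq> 0" using nz[of 3] by (simp add: field_simps)
  have f: "2*N+1 \<noteq> 0" "2*N+3 \<noteq> 0" "2*N+5 \<noteq> 0" "2*N+7 \<noteq> 0"
    using d1 d3 d5 d7 by (auto simp: field_simps)
  have m1: "u k * (2*N + 1) = 4 * x * (N+1) * u (k+1) - (2*N + 3) * u (k+2)"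
  proof -
    have "u k * (2*N + 1) = 2 * ((N + 1/2) * u k)" by (simp add: algebra_simps)
    also have "\<dots> = 2 * (2 * x * (N+1) * u (k+1) - (N + 3/2) * u (k+2))" using r1 by simp
    also have "\<dots> = 4 * x * (N+1) * u (k+1) - (2*N + 3) * u (k+2)" by (simp add: algebra_simps)
    finally show ?thesis .
  qed
  have m2: "u (k+3) * (2*N + 5) = 4 * x * (N+2) * u (k+2) - (2*N + 3) * u (k+1)"
  proof -
    have "u (k+3) * (2*N + 5) = 2 * ((N + 5/2) * u (k+3))" by (simp add: algebra_simps)
    also have "\<dots> = 2 * (2 * x * (N+2) * u (k+2) - (N + 3/2) * u (k+1))" using r2 by simp
    also have "\<dots> = 4 * x * (N+2) * u (k+2) - (2*N + 3) * u (k+1)" by (simp add: algebra_simps)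
    finally show ?thesis .
  qed
  have m3: "u (k+4) * (2*N + 7) = 4 * x * (N+3) * u (k+3) - (2*N + 5) * u (k+2)"
  proof -
    have "u (k+4) * (2*N + 7) = 2 * ((N + 7/2) * u (k+4))" by (simp add: algebra_simps)
    also have "\<dots> = 2 * (2 * x * (N+3) * u (k+3) - (N + 5/2) * u (k+2))" using r3 by simp
    also have "\<dots> = 4 * x * (N+3) * u (k+3) - (2*N + 5) * u (k+2)" by (simp add: algebra_simps)
    finally show ?thesis .
  qed
  have i: "of_nat (k+3) = N + 3" "of_nat (k+2) = N + 2" "of_nat (k+1) = N + 1" by (simp_all add: N_def)
  have pa: "(2*N+5)*(2*N+3)*(x * u (k+3) - u (k+2)) = 4*x*(N+2)*(2*N+3)*(x * u (k+2) - u (k+1)) - (2*N+5)*(2*N+1)*(x * u (k+1) - u k)"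
    using m1 m2 by algebra
  have pb: "(2*N+7)*(2*N+3)*(x * u (k+3) - u (k+4)) = 4*x*(N+2)*(2*N+5)*(x * u (k+2) - u (k+3)) - (2*N+5)*(2*N+3)*(x * u (k+1) - u (k+2))"
    using m2 m3 by algebra
  have f2: "4*N+2 \<noteq> 0" "4*N+6 \<noteq> 0" "4*N+10 \<noteq> 0" "4*N+14 \<noteq> 0"
  proof -
    have g4: "(4*N + of_nat c :: 'a) \<noteq> 0" if "c > 0" for c :: nat
    proof -
      have "(4*N + of_nat c :: 'a) = of_nat (4*k + c)" by (simp add: N_def)
      also have "\<dots> \<noteq> 0" using that by (simp only: of_nat_eq_0_iff)
      finally show ?thesis .
    qed
    show "4*N+2 \<noteq> 0" "4*N+6 \<noteq> 0" "4*N+10 \<noteq> 0" "4*N+14 \<noteq> 0"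
      using g4[of 2] g4[of 6] g4[of 10] g4[of 14] by simp_all
  qed
  have ga: "(N + 2 + 3/2) * ((x*u(k+3) - u(k+2))/(2*(N+3)+1)) = 2*x*(N+2)*((x*u(k+2)-u(k+1))/(2*(N+2)+1)) - (N+2-3/2)*((x*u(k+1)-u k)/(2*(N+1)+1))"
  proof -
    have h: "(N + 2 + 3/2) = (2*N+7)/2" "2*(N+3)+1 = 2*N+7" "2*(N+2)+1 = 2*N+5" "2*(N+1)+1 = 2*N+3" "N+2-3/2 = (2*N+1)/2"
      by (simp_all add: field_simps)
    show ?thesis unfolding h by (rule keyA) (use f pa in auto)
  qed
  have gb: "(N + 2 + 3/2) * ((x*u(k+3) - u(k+4))/(2*(N+3)-1)) = 2*x*(N+2)*((x*u(k+2)-u(k+3))/(2*(N+2)-1)) - (N+2-3/2)*((x*u(k+1)-u (k+2))/(2*(N+1)-1))"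
  proof -
    have h: "(N + 2 + 3/2) = (2*N+7)/2" "2*(N+3)-1 = 2*N+5" "2*(N+2)-1 = 2*N+3" "2*(N+1)-1 = 2*N+1" "N+2-3/2 = (2*N+1)/2"
      by (simp_all add: field_simps)
    show ?thesis unfolding h by (rule keyB) (use f pb in auto)
  qed
  show "let uh = (\<lambda>m. (x * u m - u (m-1)) / (2 * of_nat m + 1)) in
            (of_nat n + 3/2) * uh (n+1) = 2 * x * of_nat n * uh n - (of_nat n - 3/2) * uh (n-1)"
    using ga unfolding Let_def k by (simp add: N_def[symmetric] add.assoc add.commute numeral_eq_Suc)
  show "let uh = (\<lambda>m. (x * u m - u (m+1)) / (2 * of_nat m - 1)) in
            (of_nat n + 3/2) * uh (n+1) = 2 * x * of_nat n * uh n - (of_nat n - 3/2) * uh (n-1)"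
    using gb unfolding Let_def k by (simp add: N_def[symmetric] add.assoc add.commute numeral_eq_Suc)
qed

end
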